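(* Let $m_1,m_2\ge1$ and $\mathbf{Y}\sim\mathcal{SUT}_{d,m_1+m_2}(\boldsymbol{\xi},\boldsymbol{\Omega},\boldsymbol{\Delta},\boldsymbol{\tau},\bar{\boldsymbol{\Gamma}},\nu)$ with $\boldsymbol{\Delta}=(\mathbf{0},\boldsymbol{\Delta}_2)$ where $\mathbf{0}$ is $d\times m_1$ and $\boldsymbol{\Delta}_2$ is $d\times m_2$, $\boldsymbol{\tau}=(\mathbf{0}^\top,\boldsymbol{\tau}_2^\top)^\top$ with $\boldsymbol{\tau}_2\in\mathbb{R}^{m_2}$, and $\bar{\boldsymbol{\Gamma}}=\mathrm{diag}(\bar{\boldsymbol{\Gamma}}_{11},\bar{\boldsymbol{\Gamma}}_{22})$ with $\bar{\boldsymbol{\Gamma}}_{ii}$ of size $m_i\times m_i$. Then $\mathbf{Y}\sim\mathcal{SUT}_{d,m_2}(\boldsymbol{\xi},\boldsymbol{\Omega},\boldsymbol{\Delta}_2,\boldsymbol{\tau}_2,\bar{\boldsymbol{\Gamma}}_{22},\nu)$.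
   Context: Notation: $\mathcal{T}_k(\boldsymbol{\mu},\boldsymbol{\Sigma},\nu)$ is the $k$-dimensional Student $t$ distribution with location $\boldsymbol{\mu}$, dispersion $\boldsymbol{\Sigma}$ and $\nu>0$ degrees of freedom. For dimension $d$ and latent dimension $m$: parameters are $\boldsymbol{\xi}\in\mathbb{R}^d$; $\boldsymbol{\Omega}$ a $d\times d$ positive definite matrix, $\boldsymbol{\omega}=\mathrm{diag}(\boldsymbol{\Omega})^{1/2}$, $\bar{\boldsymbol{\Omega}}=\boldsymbol{\omega}^{-1}\boldsymbol{\Omega}\boldsymbol{\omega}^{-1}$; $\boldsymbol{\Delta}$ a $d\times m$ matrix; $\bar{\boldsymbol{\Gamma}}$ an $m\times m$ correlation matrix; $\boldsymbol{\tau}\in\mathbb{R}^m$; $\nu>0$; with $\bar{\boldsymbol{\Omega}}^*=\begin{pmatrix}\bar{\boldsymbol{\Gamma}}&\boldsymbol{\Delta}^\top\\ \boldsymbol{\Delta}&\bar{\boldsymbol{\Omega}}\end{pmatrix}$ positive definite. If $(\mathbf{U}_0^\top,\mathbf{U}_1^\top)^\top\sim\mathcal{T}_{m+d}(\mathbf{0},\bar{\boldsymbol{\Omega}}^*,\nu)$ ($\mathbf{U}_0\in\mathbb{R}^m$, $\mathbf{U}_1\in\mathbb{R}^d$) and $\mathbf{Z}$ has the conditional distribution of $\mathbf{U}_1$ given $\mathbf{U}_0+\boldsymbol{\tau}>\mathbf{0}$ (componentwise), then $\mathbf{Y}=\boldsymbol{\xi}+\boldsymbol{\omega}\mathbf{Z}$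 has distribution $\mathcal{SUT}_{d,m}(\boldsymbol{\xi},\boldsymbol{\Omega},\boldsymbol{\Delta},\boldsymbol{\tau},\bar{\boldsymbol{\Gamma}},\nu)$. *)

theory Defs
  imports "HOL-Probability.Probability"
begin

text \<open>Matrices are Isabelle's row-major vectors of vectors: a real^c^r matrix has rows
indexed by 'r and columns indexed by 'c.  Dimensions are finite index types.\<close>

definition sym_mat :: "real^'n^'n \<Rightarrow> bool" where
  "sym_mat A \<longleftrightarrow> transpose A = A"

definition pos_def_mat :: "real^'n^'n \<Rightarrow> bool" where
  "pos_def_mat A \<longleftrightarrow> sym_mat A \<and> (\<forall>x. x \<noteq> 0 \<longrightarrow> x \<bullet> (A *v x) > 0)"

definition corr_mat :: "real^'n^'n \<Rightarrow> bool" where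
  "corr_mat A \<longleftrightarrow> sym_mat A \<and> (\<forall>x. x \<bullet> (A *v x) \<ge> 0) \<and> (\<forall>i. A $ i $ i = 1)"

definition mvt_pdf :: "real^'k \<Rightarrow> real^'k^'k \<Rightarrow> real \<Rightarrow> real^'k \<Rightarrow> real" where
  "mvt_pdf \<mu> \<Sigma> \<nu> x =
     Gamma ((\<nu> + real CARD('k)) / 2)
     / (Gamma (\<nu> / 2) * (\<nu> * pi) powr (real CARD('k) / 2) * sqrt (det \<Sigma>))
     * (1 + ((x - \<mu>) \<bullet> (matrix_inv \<Sigma> *v (x - \<mu>))) / \<nu>) powr (- (\<nu> + real CARD('k)) / 2)"

definition mvt :: "real^'k \<Rightarrow> real^'k^'k \<Rightarrow> real \<Rightarrow> (real^'k) measure" where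
  "mvt \<mu> \<Sigma> \<nu> = density lborel (\<lambda>x. ennreal (mvt_pdf \<mu> \<Sigma> \<nu> x))"

definition scale_vec :: "real^'d^'d \<Rightarrow> real^'d" where
  "scale_vec \<Omega> = (\<chi> i. sqrt (\<Omega> $ i $ i))"

definition Omega_bar :: "real^'d^'d \<Rightarrow> real^'d^'d" where
  "Omega_bar \<Omega> = (\<chi> i j. \<Omega> $ i $ j / (scale_vec \<Omega> $ i * scale_vec \<Omega> $ j))"

text \<open>The (m+d) x (m+d) block matrix Omega-bar-star = [[Gamma, Delta^T],[Delta, Omega-bar]];
  the index type 'm + 'd puts the m latent coordinates (Inl) first.\<close>
definition Omega_star :: "real^'d^'d \<Rightarrow> real^'m^'d \<Rightarrow> real^'m^'m \<Rightarrow> real^('m + 'd)^('m + 'd)" where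
  "Omega_star \<Omega> \<Delta> \<Gamma> = (\<chi> a b. case a of
       Inl i \<Rightarrow> (case b of Inl j \<Rightarrow> \<Gamma> $ i $ j | Inr l \<Rightarrow> \<Delta> $ l $ i)
     | Inr k \<Rightarrow> (case b of Inl j \<Rightarrow> \<Delta> $ k $ j | Inr l \<Rightarrow> Omega_bar \<Omega> $ k $ l))"

definition SUT_params :: "real^'d^'d \<Rightarrow> real^'m^'d \<Rightarrow> real^'m^'m \<Rightarrow> real \<Rightarrow> bool" where
  "SUT_params \<Omega> \<Delta> \<Gamma> \<nu> \<longleftrightarrow>
     pos_def_mat \<Omega> \<and> corr_mat \<Gamma> \<and> pos_def_mat (Omega_star \<Omega> \<Delta> \<Gamma>) \<and> \<nu> > 0"

text \<open>SUT_{d,m}(xi, Omega, Delta, tau, Gamma, nu): law of xi + omega Z, where Z is U1 conditioned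
  on U0 + tau > 0, with (U0, U1) ~ T_{m+d}(0, Omega-bar-star, nu).\<close>
definition SUT :: "real^'d \<Rightarrow> real^'d^'d \<Rightarrow> real^'m^'d \<Rightarrow> real^'m \<Rightarrow> real^'m^'m \<Rightarrow> real
                    \<Rightarrow> (real^'d) measure" where
  "SUT \<xi> \<Omega> \<Delta> \<tau> \<Gamma> \<nu> =
     distr (uniform_measure (mvt 0 (Omega_star \<Omega> \<Delta> \<Gamma>) \<nu>)
                            {u :: real^('m + 'd). \<forall>i. u $ Inl i + \<tau> $ i > 0})
           borel (\<lambda>u. \<xi> + (\<chi> k. scale_vec \<Omega> $ k * u $ Inr k))"

end

theory Submission
  imports Defs
begin
lemma prod_Basis_cart: "(\<Prod>b\<in>(Basis::(real^'n) set). f b) = (\<Prod>i\<in>UNIV. f (axis i 1))"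
proof -
  have B: "(Basis::(real^'n) set) = range (\<lambda>i. axis i 1)"
    by (auto simp: Basis_vec_def)
  have "inj (\<lambda>i::'n. axis i (1::real))" by (auto intro!: injI simp: axis_eq_axis)
  then show ?thesis unfolding B by (simp add: prod.reindex)
qed

lemma prod_UNIV_sum: "(\<Prod>a\<in>(UNIV::('a::finite+'b::finite) set). f a :: 'c::comm_monoid_mult) = (\<Prod>i\<in>UNIV. f (Inl i)) * (\<Prod>j\<in>UNIV. f (Inr j))"
  by (subst UNIV_Plus_UNIV[symmetric], subst prod.Plus) auto

definition psi :: "(real^'m1::finite) \<times> (real^('m2::finite+'d::finite)) \<Rightarrow> real^(('m1+'m2)+'d)" where
  "psi p = (\<chi> a. case a of Inl (Inl i) \<Rightarrow> fst p $ i | Inl (Inr j) \<Rightarrow> snd p $ Inl j | Inr k \<Rightarrow> snd p $ Inr k)"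
definition rho :: "real^(('m1::finite+'m2::finite)+'d::finite) \<Rightarrow> real^('m2+'d)" where
  "rho u = (\<chi> a. case a of Inl j \<Rightarrow> u $ Inl (Inr j) | Inr k \<Rightarrow> u $ Inr k)"
definition pi1 :: "real^(('m1::finite+'m2::finite)+'d::finite) \<Rightarrow> real^'m1" where
  "pi1 u = (\<chi> i. u $ Inl (Inl i))"

lemma psi_comp[simp]: "psi (v, w) $ Inl (Inl i) = v $ i" "psi (v, w) $ Inl (Inr j) = w $ Inl j"
  "psi (v, w) $ Inr k = w $ Inr k"
  by (simp_all add: psi_def)
lemma rho_psi[simp]: "rho (psi (v, w)) = w"
  by (simp add: rho_def vec_eq_iff split: sum.splits)
lemma pi1_psi[simp]: "pi1 (psi (v, w)) = v"
  by (simp add: pi1_def vec_eq_iff)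
lemma rho_comp[simp]: "rho u $ Inl j = u $ Inl (Inr j)" "rho u $ Inr k = u $ Inr k"
  by (simp_all add: rho_def)
lemma pi1_comp[simp]: "pi1 u $ i = u $ Inl (Inl i)"
  by (simp add: pi1_def)

lemma psi_linear: "linear psi"
  by (auto intro!: linearI simp: psi_def vec_eq_iff split: sum.splits)

lemma psi_measurable[measurable]: "psi \<in> borel_measurable borel"
  by (intro borel_measurable_continuous_onI linear_continuous_on linear_conv_bounded_linear[THEN iffD1] psi_linear)

lemma rho_linear: "linear rho"
  by (auto intro!: linearI simp: rho_def vec_eq_iff split: sum.splits)
lemma rho_measurable[measurable]: "rho \<in> borel_measurable borel"
  by (intro borel_measurable_continuous_onI linear_continuous_on linear_conv_bounded_linear[THEN iffD1] rho_linear)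

lemma all_sum_iff: "(\<forall>a. P a) \<longleftrightarrow> (\<forall>i. P (Inl i)) \<and> (\<forall>j. P (Inr j))"
  by (metis sum.exhaust)

lemma box_cart_iff: "x \<in> box l (u::real^'n) \<longleftrightarrow> (\<forall>i. l $ i < x $ i \<and> x $ i < u $ i)"
  by (auto simp: mem_box Basis_vec_def inner_axis)

lemma emeasure_box_cart: "(\<And>i. l $ i \<le> u $ i) \<Longrightarrow> emeasure lborel (box l (u::real^'n)) = ennreal (\<Prod>i\<in>UNIV. u $ i - l $ i)"
  apply (subst emeasure_lborel_box)
   apply (auto simp: Basis_vec_def inner_axis)[1]
  apply (simp only: prod_Basis_cart)
  apply (simp add: inner_axis)
  done

lemma lborel_split: "(lborel :: (real^(('m1::finite+'m2::finite)+'d::finite)) measure) = distr (lborel \<Otimes>\<^sub>M lborel) borel psi"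
proof (rule lborel_eqI)
  fix l u :: "real^(('m1::finite+'m2::finite)+'d::finite)"
  assume le: "\<And>b. b \<in> Basis \<Longrightarrow> l \<bullet> b \<le> u \<bullet> b"
  then have le': "l $ a \<le> u $ a" for a
    using le[of "axis a 1"] by (auto simp add: Basis_vec_def inner_axis)
  have pre: "psi -` box l u \<inter> space (lborel \<Otimes>\<^sub>M lborel) = box (pi1 l) (pi1 u) \<times> box (rho l) (rho u)"
  proof -
    have "psi p \<in> box l u \<longleftrightarrow> p \<in> box (pi1 l) (pi1 u) \<times> box (rho l) (rho u)" for p
      by (cases p) (simp add: box_cart_iff all_sum_iff[of "\<lambda>a. l $ a < psi _ $ a \<and> psi _ $ a < u $ a"] all_sum_iff[of "\<lambda>a. rho l $ a < _ $ a \<and> _ $ a < rho u $ a"] all_sum_iff[of "\<lambda>a. l $ Inl a < psi _ $ Inl a \<and> psi _ $ Inl a < u $ Inl a"])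
    then show ?thesis by (auto simp: space_pair_measure)
  qed
  have "emeasure (distr (lborel \<Otimes>\<^sub>M lborel) borel psi) (box l u)
     = emeasure lborel (box (pi1 l) (pi1 u)) * emeasure lborel (box (rho l) (rho u))"
  proof -
    have m: "psi \<in> lborel \<Otimes>\<^sub>M lborel \<rightarrow>\<^sub>M borel"
      using psi_measurable by (simp add: lborel_prod)
    show ?thesis
      by (subst emeasure_distr[OF m]) (simp_all add: pre lborel.emeasure_pair_measure_Times)
  qed
  also have "\<dots> = ennreal ((\<Prod>i\<in>UNIV. (u-l) $ Inl (Inl i)) * (\<Prod>a\<in>UNIV. (u - l) $ Inl (Inr a)) * (\<Prod>a\<in>UNIV. (u - l) $ Inr a))"
    using le'
    apply (subst emeasure_box_cart, simp)
    apply (subst emeasure_box_cart, simp add: rho_def split: sum.splits)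
    apply (simp add: prod_UNIV_sum ennreal_mult[symmetric] prod_nonneg mult.assoc rho_def)
    done
  also have "\<dots> = (\<Prod>b\<in>Basis. (u - l) \<bullet> b)"
    by (simp add: prod_Basis_cart inner_axis prod_UNIV_sum)
  finally show "emeasure (distr (lborel \<Otimes>\<^sub>M lborel) borel psi) (box l u) = (\<Prod>b\<in>Basis. (u - l) \<bullet> b)" .
qed simp

definition qpos :: "real^'n^'n \<Rightarrow> bool" where
  "qpos A \<longleftrightarrow> (\<forall>x. x \<noteq> 0 \<longrightarrow> x \<bullet> (A *v x) > 0)"

lemma pos_def_qpos: "pos_def_mat A \<Longrightarrow> qpos A"
  by (simp add: pos_def_mat_def qpos_def)

lemma qpos_invertible: assumes "qpos A" shows "invertible A"
proof -
  have "\<forall>x. A *v x = 0 \<longrightarrow> x = 0"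
    using assms unfolding qpos_def by (metis inner_zero_right less_irrefl)
  then show ?thesis
    by (simp add: invertible_left_inverse matrix_left_invertible_ker)
qed

lemma matrix_inv_props: assumes "invertible A"
  shows "A ** matrix_inv A = mat 1" "matrix_inv A ** A = mat 1"
proof -
  have "\<exists>A'. A ** A' = mat 1 \<and> A' ** A = mat 1" using assms by (simp add: invertible_def)
  then have "A ** matrix_inv A = mat 1 \<and> matrix_inv A ** A = mat 1"
    unfolding matrix_inv_def by (rule someI_ex)
  then show "A ** matrix_inv A = mat 1" "matrix_inv A ** A = mat 1" by auto
qed

lemma matrix_inv_mv: assumes "invertible A"
  shows "A *v (matrix_inv A *v x) = x" "matrix_inv A *v (A *v x) = x"
  using matrix_inv_props[OF assms]
  by (simp_all add: matrix_vector_mul_assoc)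

lemma qpos_inv: fixes A :: "real^'n^'n" assumes "qpos A" shows "qpos (matrix_inv A)"
  unfolding qpos_def
proof (intro allI impI)
  fix x :: "real^'n" assume x: "x \<noteq> 0"
  have inv: "invertible A" using qpos_invertible[OF assms] .
  define y where "y = matrix_inv A *v x"
  have xy: "x = A *v y" using matrix_inv_mv(1)[OF inv] by (simp add: y_def)
  have "y \<noteq> 0" using x xy by auto
  then have "y \<bullet> (A *v y) > 0" using assms by (simp add: qpos_def)
  then show "x \<bullet> (matrix_inv A *v x) > 0"
    by (simp add: y_def[symmetric] xy[symmetric] inner_commute)
qed

lemma qform_scale: "(c *\<^sub>R x) \<bullet> (A *v (c *\<^sub>R x)) = c^2 * (x \<bullet> (A *v (x::real^'n)))"
  by (simp add: matrix_vector_mult_scaleR power2_eq_square)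

lemma qform_nonneg: "qpos A \<Longrightarrow> x \<bullet> (A *v x) \<ge> 0"
  by (cases "x = 0") (auto simp: qpos_def less_imp_le)

lemma qform_continuous: "continuous_on S (\<lambda>x::real^'n. x \<bullet> (A *v x))"
  by (intro continuous_intros linear_continuous_on linear_conv_bounded_linear[THEN iffD1] matrix_vector_mul_linear)

lemma qpos_lower: assumes "qpos A"
  shows "\<exists>lam>0. \<forall>x::real^'n. x \<bullet> (A *v x) \<ge> lam * (norm x)^2"
proof -
  have cpt: "compact (sphere (0::real^'n) 1)" by simp
  obtain e :: "real^'n" where e: "norm e = 1"
    using vector_choose_size[of 1] by auto
  then have ne: "sphere (0::real^'n) 1 \<noteq> {}" by auto
  obtain z where z: "z \<in> sphere 0 1" and zmin: "\<forall>y\<in>sphere 0 1. z \<bullet> (A *v z) \<le> y \<bullet> (A *v y)"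
    using continuous_attains_inf[OF cpt ne qform_continuous] by blast
  have "z \<noteq> 0" using z by auto
  then have pos: "z \<bullet> (A *v z) > 0" using assms by (simp add: qpos_def)
  have "x \<bullet> (A *v x) \<ge> (z \<bullet> (A *v z)) * (norm x)^2" for x :: "real^'n"
  proof (cases "x = 0")
    case True then show ?thesis by simp
  next
    case False
    define y where "y = (1 / norm x) *\<^sub>R x"
    have "y \<in> sphere 0 1" using False by (simp add: y_def)
    then have "z \<bullet> (A *v z) \<le> y \<bullet> (A *v y)" using zmin by blast
    also have "y \<bullet> (A *v y) = (1 / norm x)^2 * (x \<bullet> (A *v x))"
      unfolding y_def qform_scale ..
    finally have "(z \<bullet> (A *v z)) * (norm x)^2 \<le> (1 / norm x)^2 * (x \<bullet> (A *v x)) * (norm x)^2"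
      by (simp add: mult_right_mono)
    also have "\<dots> = x \<bullet> (A *v x)" using False by (simp add: field_simps)
    finally show ?thesis .
  qed
  then show ?thesis using pos by blast
qed

lemma qpos_det: fixes A :: "real^'n^'n" assumes "qpos A" shows "det A > 0"
proof -
  define M where "M t = (\<chi> i j. t * A $ i $ j + (1 - t) * mat 1 $ i $ j)" for t :: real
  have Mv: "M t *v x = t *\<^sub>R (A *v x) + (1 - t) *\<^sub>R x" for t x
  proof -
    have "(\<Sum>j\<in>UNIV. (t * A $ i $ j + (1 - t) * (if i = j then 1 else 0)) * x $ j)
       = t * (\<Sum>j\<in>UNIV. A $ i $ j * x $ j) + (1 - t) * x $ i" for i
    proof -
      have "(\<Sum>j\<in>UNIV. (t * A $ i $ j + (1 - t) * (if i = j then 1 else 0)) * x $ j)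
        = (\<Sum>j\<in>UNIV. t * (A $ i $ j * x $ j)) + (\<Sum>j\<in>UNIV. (if i = j then (1 - t) * x $ j else 0))"
        by (subst sum.distrib[symmetric], rule sum.cong) (auto simp: algebra_simps)
      then show ?thesis by (simp add: sum_distrib_left)
    qed
    then show ?thesis by (simp add: M_def matrix_vector_mult_def vec_eq_iff mat_def)
  qed
  have nz: "det (M t) \<noteq> 0" if "t \<in> {0..1}" for t
  proof -
    have "qpos (M t)" unfolding qpos_def
    proof (intro allI impI)
      fix x :: "real^'n" assume "x \<noteq> 0"
      then have a: "x \<bullet> (A *v x) > 0" "x \<bullet> x > 0" using assms by (auto simp: qpos_def)
      have "x \<bullet> (M t *v x) = t * (x \<bullet> (A *v x)) + (1 - t) * (x \<bullet> x)"
        by (simp add: Mv inner_add_right)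
      also have "\<dots> > 0" using that a
        by (cases "t = 0") (auto intro: add_pos_nonneg add_nonneg_pos)
      finally show "x \<bullet> (M t *v x) > 0" .
    qed
    then show ?thesis using qpos_invertible invertible_det_nz by blast
  qed
  have cont: "continuous_on {0..1} (\<lambda>t. det (M t))"
    unfolding det_def M_def by (intro continuous_intros) 
  have M0: "det (M 0) = 1" by (simp add: M_def)
  have M1: "M 1 = A" by (simp add: M_def vec_eq_iff)
  show ?thesis
  proof (rule ccontr)
    assume "\<not> det A > 0"
    then have "det (M 1) \<le> 0" using M1 by simp
    then obtain t where "t \<in> {0..1}" "det (M t) = 0"
      using IVT2'[of "\<lambda>t. det (M t)" 1 0 0] cont M0 by auto
    then show False using nz by blast
  qed
qed

lemma sum_UNIV_sum: "(\<Sum>a\<in>(UNIV::('a::finite+'b::finite) set). f a :: 'c::comm_monoid_add) = (\<Sum>i\<in>UNIV. f (Inl i)) + (\<Sum>j\<in>UNIV. f (Inr j))"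
  by (subst UNIV_Plus_UNIV[symmetric], subst sum.Plus) auto

lemma inner_psi: "psi (a, b) \<bullet> psi (c, d) = a \<bullet> c + b \<bullet> d"
  by (simp add: inner_vec_def sum_UNIV_sum)

lemma psi_surj: "psi (pi1 u, rho u) = u"
  by (simp add: vec_eq_iff all_sum_iff[of "\<lambda>a. psi _ $ a = u $ a"] all_sum_iff[of "\<lambda>a. psi _ $ Inl a = u $ Inl a"])

lemma psi_inj: "psi p = psi q \<Longrightarrow> p = q"
  by (metis pi1_psi rho_psi prod.collapse)

lemma psi_zero: "psi (0, 0) = 0"
  by (simp add: psi_def vec_eq_iff split: sum.splits)

context
  fixes \<Omega> :: "real^'d::finite^'d" and \<Delta>2 :: "real^'m2::finite^'d"
    and \<Gamma>11 :: "real^'m1::finite^'m1" and \<Gamma>22 :: "real^'m2^'m2"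
begin

definition "DD = ((\<chi> k a. case a of Inl i \<Rightarrow> 0 | Inr j \<Rightarrow> \<Delta>2 $ k $ j) :: real^('m1 + 'm2)^'d)"
definition "GG = ((\<chi> a b. case a of
              Inl i \<Rightarrow> (case b of Inl j \<Rightarrow> \<Gamma>11 $ i $ j | Inr j \<Rightarrow> 0)
            | Inr i \<Rightarrow> (case b of Inl j \<Rightarrow> 0 | Inr j \<Rightarrow> \<Gamma>22 $ i $ j)) :: real^('m1 + 'm2)^('m1 + 'm2))"

lemma block_mv:
  "Omega_star \<Omega> DD GG *v psi (y1, y2) = psi (\<Gamma>11 *v y1, Omega_star \<Omega> \<Delta>2 \<Gamma>22 *v y2)"
  unfolding vec_eq_iff
  apply (simp add: all_sum_iff[of "\<lambda>a. _ $ a = psi _ $ a"] all_sum_iff[of "\<lambda>a. _ $ Inl a = psi _ $ Inl a"])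
  apply (simp add: matrix_vector_mult_def sum_UNIV_sum Omega_star_def DD_def GG_def)
  done

lemma qpos_blocks: assumes "qpos (Omega_star \<Omega> DD GG)"
  shows "qpos \<Gamma>11" "qpos (Omega_star \<Omega> \<Delta>2 \<Gamma>22)"
proof -
  show "qpos \<Gamma>11" unfolding qpos_def
  proof (intro allI impI)
    fix x :: "real^'m1" assume "x \<noteq> 0"
    then have "psi (x, 0::real^('m2+'d)) \<noteq> 0" using psi_inj psi_zero by (metis prod.inject)
    then have "psi (x, 0::real^('m2+'d)) \<bullet> (Omega_star \<Omega> DD GG *v psi (x, 0)) > 0"
      using assms by (simp add: qpos_def)
    then show "x \<bullet> (\<Gamma>11 *v x) > 0" by (simp add: block_mv inner_psi)
  qed
  show "qpos (Omega_star \<Omega> \<Delta>2 \<Gamma>22)" unfolding qpos_def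
  proof (intro allI impI)
    fix x :: "real^('m2+'d)" assume "x \<noteq> 0"
    then have "psi (0::real^'m1, x) \<noteq> 0" using psi_inj psi_zero by (metis prod.inject)
    then have "psi (0::real^'m1, x) \<bullet> (Omega_star \<Omega> DD GG *v psi (0, x)) > 0"
      using assms by (simp add: qpos_def)
    then show "x \<bullet> (Omega_star \<Omega> \<Delta>2 \<Gamma>22 *v x) > 0" by (simp add: block_mv inner_psi)
  qed
qed

lemma Q_split: assumes "qpos (Omega_star \<Omega> DD GG)"
  shows "psi (v, w) \<bullet> (matrix_inv (Omega_star \<Omega> DD GG) *v psi (v, w))
     = v \<bullet> (matrix_inv \<Gamma>11 *v v) + w \<bullet> (matrix_inv (Omega_star \<Omega> \<Delta>2 \<Gamma>22) *v w)"
proof -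
  let ?S = "Omega_star \<Omega> DD GG" and ?S2 = "Omega_star \<Omega> \<Delta>2 \<Gamma>22"
  have i1: "invertible ?S" by (rule qpos_invertible[OF assms])
  have i2: "invertible \<Gamma>11" "invertible ?S2" using qpos_blocks[OF assms] qpos_invertible by auto
  define y where "y = matrix_inv ?S *v psi (v, w)"
  have "?S *v y = psi (v, w)" unfolding y_def by (rule matrix_inv_mv(1)[OF i1])
  then have "psi (\<Gamma>11 *v pi1 y, ?S2 *v rho y) = psi (v, w)"
    by (metis block_mv psi_surj)
  then have e: "\<Gamma>11 *v pi1 y = v" "?S2 *v rho y = w" using psi_inj by auto
  have "pi1 y = matrix_inv \<Gamma>11 *v v" using matrix_inv_mv(2)[OF i2(1), of "pi1 y"] e by simp
  moreover have "rho y = matrix_inv ?S2 *v w" using matrix_inv_mv(2)[OF i2(2), of "rho y"] e by simp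
  moreover have "psi (v, w) \<bullet> y = v \<bullet> pi1 y + w \<bullet> rho y"
    by (metis inner_psi psi_surj)
  ultimately show ?thesis unfolding y_def by simp
qed

end

lemma tail_integral_finite:
  fixes e :: real assumes e: "e < -1"
  shows "(\<integral>\<^sup>+x. ennreal (indicator {1..} x * x powr e) \<partial>lborel) < \<infinity>"
proof -
  have "((\<lambda>x. x powr e) has_integral -(1 powr (e+1)) / (e+1)) {1..}"
    by (rule has_integral_powr_to_inf[OF e]) simp
  then have "((\<lambda>x. indicator {1..} x * x powr e) has_integral -(1 powr (e+1)) / (e+1)) UNIV"
  proof -
    have "(\<lambda>x. indicator {1..} x * x powr e) = (\<lambda>x. if x \<in> {1..} then x powr e else 0)"
      by (auto simp: indicator_def fun_eq_iff)
    then show ?thesis using \<open>((\<lambda>x. x powr e) has_integral _) {1..}\<close>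
      by (simp only: has_integral_restrict_UNIV)
  qed
  then have "(\<integral>\<^sup>+x. ennreal (indicator {1..} x * x powr e) \<partial>lborel) = ennreal (-(1 powr (e+1)) / (e+1))"
    by (intro nn_integral_has_integral_lborel) auto
  then show ?thesis by simp
qed

lemma oneD_finite:
  fixes c q :: real assumes c: "c > 0" and q: "q > 1/2"
  shows "(\<integral>\<^sup>+x. ennreal ((1 + c * x^2) powr (-q)) \<partial>lborel) < \<infinity>"
proof -
  define h where "h x = indicator {1..} x * x powr (-2*q)" for x :: real
  have hnn: "h x \<ge> 0" for x by (simp add: h_def)
  have bound: "(1 + c * x^2) powr (-q) \<le> indicator {-1..1} x + c powr (-q) * (h x + h (-x))" for x :: real
  proof -
    have A: "(1 + c * y^2) powr (-q) \<le> c powr (-q) * y powr (-2*q)" if y: "y \<ge> 1" for y :: real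
    proof -
      have "(1 + c * y^2) powr (-q) \<le> (c * y^2) powr (-q)"
        using c y q by (intro powr_mono2') auto
      also have "\<dots> = c powr (-q) * (y powr 2) powr (-q)"
        using y by (simp add: powr_mult powr_realpow)
      also have "\<dots> = c powr (-q) * y powr (-2*q)" by (simp add: powr_powr)
      finally show ?thesis .
    qed
    consider "x \<ge> 1" | "x \<le> -1" | "-1 < x \<and> x < 1" by linarith
    then show ?thesis
    proof cases
      case 1
      then have "h x = x powr (-2*q)" by (simp add: h_def)
      with A[OF 1] show ?thesis
        by (smt (verit) hnn indicator_pos_le mult_left_mono powr_ge_zero)
    next
      case 2
      then have "h (-x) = (-x) powr (-2*q)" by (simp add: h_def)
      moreover have "(1 + c * x^2) = 1 + c * (-x)^2" by simp
      ultimately show ?thesis using A[of "-x"] 2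
        by (smt (verit) hnn indicator_pos_le mult_left_mono powr_ge_zero)
    next
      case 3
      have "(1 + c * x^2) powr (-q) \<le> 1 powr (-q)"
        using c q by (intro powr_mono2') auto
      then have "(1 + c * x^2) powr (-q) \<le> indicator {-1..1} x" using 3 by simp
      then show ?thesis using hnn c
        by (smt (verit) mult_nonneg_nonneg powr_ge_zero)
    qed
  qed
  have hm[measurable]: "h \<in> borel_measurable borel" unfolding h_def by measurable
  have H: "(\<integral>\<^sup>+x. ennreal (h x) \<partial>lborel) < \<infinity>"
    unfolding h_def using q by (intro tail_integral_finite) simp
  have Hm: "(\<integral>\<^sup>+x. ennreal (h (-x)) \<partial>lborel) = (\<integral>\<^sup>+x. ennreal (h x) \<partial>lborel)"
  proof -
    have "(\<integral>\<^sup>+x. ennreal (h x) \<partial>lborel) = (\<integral>\<^sup>+x. ennreal (h x) \<partial>distr lborel borel uminus)"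
      by (simp add: lborel_distr_uminus)
    also have "\<dots> = (\<integral>\<^sup>+x. ennreal (h (-x)) \<partial>lborel)"
      by (subst nn_integral_distr) auto
    finally show ?thesis by simp
  qed
  have "(\<integral>\<^sup>+x. ennreal ((1 + c * x^2) powr (-q)) \<partial>lborel)
     \<le> (\<integral>\<^sup>+x. ennreal (indicator {-1..1} x) + ennreal (c powr (-q)) * (ennreal (h x) + ennreal (h (-x))) \<partial>lborel)"
    using bound hnn
    by (intro nn_integral_mono) (simp add: ennreal_plus[symmetric] ennreal_mult[symmetric] del: ennreal_plus)
  also have "\<dots> = 2 + ennreal (c powr (-q)) * ((\<integral>\<^sup>+x. ennreal (h x) \<partial>lborel) + (\<integral>\<^sup>+x. ennreal (h (-x)) \<partial>lborel))"
    by (simp add: nn_integral_add nn_integral_cmult ennreal_indicator)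
  also have "\<dots> < \<infinity>" using H unfolding Hm
    by (simp add: ennreal_mult_less_top)
  finally show ?thesis .
qed

lemma multiD_finite:
  fixes c p :: real assumes c: "c > 0" and p: "p > real DIM('a::euclidean_space) / 2"
  shows "(\<integral>\<^sup>+v. ennreal ((1 + c * (norm v)^2) powr (-p)) \<partial>(lborel::'a measure)) < \<infinity>"
proof -
  define k where "k = real DIM('a)"
  have k: "k > 0" by (simp add: k_def)
  define q where "q = p / k"
  have q: "q > 1/2" using p k by (simp add: q_def k_def field_simps)
  have pt: "(1 + c * (norm v)^2) powr (-p) \<le> (\<Prod>b\<in>Basis. (1 + c * (v \<bullet> b)^2) powr (-q))" for v :: 'a
  proof -
    have le: "(\<Prod>b\<in>(Basis::'a set). (1 + c * (v \<bullet> b)^2)) \<le> (\<Prod>b\<in>(Basis::'a set). (1 + c * (norm v)^2))"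
    proof (intro prod_mono conjI)
      fix b :: 'a assume "b \<in> Basis"
      then have "\<bar>v \<bullet> b\<bar> \<le> norm v" by (rule Basis_le_norm)
      then have "(v \<bullet> b)^2 \<le> (norm v)^2" by (metis abs_ge_zero power2_abs power_mono)
      then show "1 + c * (v \<bullet> b)^2 \<le> 1 + c * (norm v)^2" using c by simp
    qed (use c in auto)
    have pos: "0 < (\<Prod>b\<in>(Basis::'a set). (1 + c * (v \<bullet> b)^2))"
      using c by (intro prod_pos) (simp add: add_pos_nonneg)
    have "(1 + c * (norm v)^2) powr (-p) = ((1 + c * (norm v)^2) ^ DIM('a)) powr (-q)"
      using c k by (simp add: powr_realpow[symmetric] powr_powr q_def k_def add_pos_nonneg)
    also have "\<dots> = (\<Prod>b\<in>(Basis::'a set). (1 + c * (norm v)^2)) powr (-q)" by simp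
    also have "\<dots> \<le> (\<Prod>b\<in>(Basis::'a set). (1 + c * (v \<bullet> b)^2)) powr (-q)"
      using q pos le by (intro powr_mono2') auto
    also have "\<dots> = (\<Prod>b\<in>Basis. (1 + c * (v \<bullet> b)^2) powr (-q))" by (rule prod_powr_distrib)
    finally show ?thesis .
  qed
  have "(\<integral>\<^sup>+v. ennreal ((1 + c * (norm v)^2) powr (-p)) \<partial>(lborel::'a measure))
     \<le> (\<integral>\<^sup>+v. (\<Prod>b\<in>Basis. ennreal ((1 + c * (v \<bullet> b)^2) powr (-q))) \<partial>(lborel::'a measure))"
    using pt by (intro nn_integral_mono) (simp add: prod_ennreal ennreal_leI)
  also have "\<dots> = (\<Prod>b\<in>(Basis::'a set). (\<integral>\<^sup>+x. ennreal ((1 + c * x^2) powr (-q)) \<partial>lborel))"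
    by (rule nn_integral_lborel_prod[where f="\<lambda>b x. ennreal ((1 + c * x^2) powr (-q))"]) auto
  also have "\<dots> < \<infinity>"
    using oneD_finite[OF c q] by (simp add: less_top[symmetric] power_eq_top_ennreal_iff)
  finally show ?thesis .
qed

lemma qform_meas[measurable]: "(\<lambda>x::real^'n. x \<bullet> (A *v x)) \<in> borel_measurable borel"
  by (intro borel_measurable_continuous_onI qform_continuous)

definition posorth :: "(real^'n) set" where "posorth = {v. \<forall>i. 0 < v $ i}"

lemma posorth_open: "open (posorth :: (real^'n) set)"
proof -
  have "(posorth :: (real^'n) set) = (\<Inter>i\<in>UNIV. {v. 0 < v $ i})" by (auto simp: posorth_def)
  moreover have "open {v::real^'n. 0 < v $ i}" for i
    by (intro open_Collect_less continuous_intros)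
  ultimately show ?thesis by (metis finite open_INT)
qed

lemma posorth_meas[measurable]: "(posorth :: (real^'n) set) \<in> sets borel"
  using posorth_open by (rule borel_open)

lemma posorth_scale: "c > 0 \<Longrightarrow> c *\<^sub>R v \<in> posorth \<longleftrightarrow> v \<in> posorth"
  by (auto simp: posorth_def zero_less_mult_iff)

lemma scaling:
  fixes Gi :: "real^'m^'m" and s \<nu> p :: real
  assumes s: "s > 0" and nu: "\<nu> > 0"
  shows "(\<integral>\<^sup>+v. ennreal ((s + v \<bullet> (Gi *v v) / \<nu>) powr (-p)) * indicator posorth v \<partial>lborel)
    = ennreal (s powr (real CARD('m) / 2 - p)) * (\<integral>\<^sup>+v. ennreal ((1 + v \<bullet> (Gi *v v) / \<nu>) powr (-p)) * indicator posorth v \<partial>lborel)"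
proof -
  define c where "c = sqrt s"
  have c: "c > 0" "c^2 = s" using s by (auto simp: c_def)
  have L: "(lborel :: (real^'m) measure) = density (distr lborel borel (\<lambda>x. 0 + c *\<^sub>R x)) (\<lambda>_. \<bar>c\<bar>^DIM(real^'m))"
    using lborel_affine[where 'a="real^'m", of c 0] c by simp
  let ?f = "\<lambda>v::real^'m. ennreal ((s + v \<bullet> (Gi *v v) / \<nu>) powr (-p)) * indicator posorth v"
  have "(\<integral>\<^sup>+v. ?f v \<partial>lborel) = (\<integral>\<^sup>+v. ?f v \<partial>density (distr lborel borel (\<lambda>x. 0 + c *\<^sub>R x)) (\<lambda>_. \<bar>c\<bar>^DIM(real^'m)))"
    by (subst (1) L) (rule refl)
  also have "\<dots> = (\<integral>\<^sup>+v. ennreal (\<bar>c\<bar>^DIM(real^'m)) * ?f (c *\<^sub>R v) \<partial>lborel)"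
    by (subst nn_integral_density) (simp_all add: nn_integral_distr)
  also have "\<dots> = (\<integral>\<^sup>+v. ennreal (s powr (real CARD('m) / 2 - p)) * (ennreal ((1 + v \<bullet> (Gi *v v) / \<nu>) powr (-p)) * indicator posorth v) \<partial>lborel)"
  proof (intro nn_integral_cong)
    fix v :: "real^'m"
    have "\<bar>c\<bar>^DIM(real^'m) = s powr (real CARD('m) / 2)"
      using c s by (simp add: c_def powr_realpow[symmetric] powr_powr sqrt_def root_powr_inverse  real_root_pos_pos)
    moreover have "(s + (c *\<^sub>R v) \<bullet> (Gi *v (c *\<^sub>R v)) / \<nu>) powr (-p) = s powr (-p) * (1 + v \<bullet> (Gi *v v) / \<nu>) powr (-p)"
    proof -
      have "s + (c *\<^sub>R v) \<bullet> (Gi *v (c *\<^sub>R v)) / \<nu> = s * (1 + v \<bullet> (Gi *v v) / \<nu>)"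
      proof -
        have "(c *\<^sub>R v) \<bullet> (Gi *v (c *\<^sub>R v)) = s * (v \<bullet> (Gi *v v))"
          by (subst qform_scale) (simp add: c(2))
        then show ?thesis by (simp add: distrib_left)
      qed
      then show ?thesis by (simp add: powr_mult)
    qed
    moreover have "indicator posorth (c *\<^sub>R v) = (indicator posorth v :: ennreal)"
      using posorth_scale[OF c(1), of v] by (simp add: indicator_def)
    moreover have "s powr (real CARD('m) / 2 - p) = s powr (real CARD('m) / 2) * s powr (-p)"
      by (simp add: powr_add[symmetric])
    ultimately show "ennreal (\<bar>c\<bar>^DIM(real^'m)) * ?f (c *\<^sub>R v) = ennreal (s powr (real CARD('m) / 2 - p)) * (ennreal ((1 + v \<bullet> (Gi *v v) / \<nu>) powr (-p)) * indicator posorth v)"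
      by (simp only: ennreal_mult powr_ge_zero mult_nonneg_nonneg mult.assoc)
  qed
  also have "\<dots> = ennreal (s powr (real CARD('m) / 2 - p)) * (\<integral>\<^sup>+v. ennreal ((1 + v \<bullet> (Gi *v v) / \<nu>) powr (-p)) * indicator posorth v \<partial>lborel)"
    by (rule nn_integral_cmult) measurable
  finally show ?thesis .
qed

lemma I_fin:
  fixes Gi :: "real^'m^'m" and \<nu> p :: real
  assumes G: "qpos Gi" and nu: "\<nu> > 0" and p: "p > real CARD('m) / 2"
  shows "(\<integral>\<^sup>+v. ennreal ((1 + v \<bullet> (Gi *v v) / \<nu>) powr (-p)) * indicator posorth v \<partial>lborel) < \<infinity>"
proof -
  obtain lam where lam: "lam > 0" "\<And>x. x \<bullet> (Gi *v x) \<ge> lam * (norm x)^2"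
    using qpos_lower[OF G] by blast
  have "(\<integral>\<^sup>+v. ennreal ((1 + v \<bullet> (Gi *v v) / \<nu>) powr (-p)) * indicator posorth v \<partial>lborel)
     \<le> (\<integral>\<^sup>+v. ennreal ((1 + (lam / \<nu>) * (norm v)^2) powr (-p)) \<partial>(lborel::(real^'m) measure))"
  proof (intro nn_integral_mono)
    fix v :: "real^'m"
    have "(1 + v \<bullet> (Gi *v v) / \<nu>) powr (-p) \<le> (1 + (lam / \<nu>) * (norm v)^2) powr (-p)"
    proof (rule powr_mono2')
      show "- p \<le> 0" using p by (smt (verit) divide_nonneg_nonneg of_nat_0_le_iff)
      show "0 < 1 + lam / \<nu> * (norm v)\<^sup>2" using lam nu by (simp add: add_pos_nonneg)
      show "1 + lam / \<nu> * (norm v)\<^sup>2 \<le> 1 + v \<bullet> (Gi *v v) / \<nu>"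
        using lam(2)[of v] nu by (simp add: divide_right_mono)
    qed
    then show "ennreal ((1 + v \<bullet> (Gi *v v) / \<nu>) powr (-p)) * indicator posorth v \<le> ennreal ((1 + (lam / \<nu>) * (norm v)^2) powr (-p))"
      by (simp add: indicator_def ennreal_leI)
  qed
  also have "\<dots> < \<infinity>"
    using p lam nu by (intro multiD_finite) auto
  finally show ?thesis .
qed

lemma I_pos:
  fixes Gi :: "real^'m^'m" and \<nu> p :: real
  assumes G: "qpos Gi" and nu: "\<nu> > 0"
  shows "(\<integral>\<^sup>+v. ennreal ((1 + v \<bullet> (Gi *v v) / \<nu>) powr (-p)) * indicator posorth v \<partial>lborel) > 0"
proof (rule ccontr)
  let ?f = "\<lambda>v::real^'m. ennreal ((1 + v \<bullet> (Gi *v v) / \<nu>) powr (-p)) * indicator posorth v"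
  assume "\<not> (\<integral>\<^sup>+v. ?f v \<partial>lborel) > 0"
  then have "(\<integral>\<^sup>+v. ?f v \<partial>lborel) = 0" by (simp add: not_gr_zero)
  then have "AE v in lborel. ?f v = 0" by (subst (asm) nn_integral_0_iff_AE) auto
  moreover have "?f v = 0 \<longleftrightarrow> v \<notin> posorth" for v
  proof -
    have "1 + v \<bullet> (Gi *v v) / \<nu> > 0" using qform_nonneg[OF G, of v] nu by (simp add: add_pos_nonneg)
    then show ?thesis by (simp add: indicator_def)
  qed
  ultimately have "AE v in (lborel::(real^'m) measure). v \<notin> posorth" by simp
  then have "emeasure lborel (posorth :: (real^'m) set) = 0"
    by (subst (asm) AE_iff_measurable[of posorth]) auto
  moreover have "emeasure lborel (box 0 (1::real^'m)) = 1"
    by (subst emeasure_box_cart) auto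
  moreover have "box 0 (1::real^'m) \<subseteq> posorth" by (auto simp: box_cart_iff posorth_def)
  ultimately show False
    by (metis emeasure_mono posorth_meas sets_lborel le_zero_eq zero_neq_one)
qed

lemma card_sum: "CARD('a::finite + 'b::finite) = CARD('a) + CARD('b)"
  by (metis UNIV_Plus_UNIV card_Plus finite)

definition Kc :: "real^'k^'k \<Rightarrow> real \<Rightarrow> real" where
  "Kc S \<nu> = Gamma ((\<nu> + real CARD('k)) / 2)
     / (Gamma (\<nu> / 2) * (\<nu> * pi) powr (real CARD('k) / 2) * sqrt (det S))"

lemma mvt_pdf_eq: "mvt_pdf 0 S \<nu> x = Kc S \<nu> * (1 + (x \<bullet> (matrix_inv S *v x)) / \<nu>) powr (- (\<nu> + real CARD('k)) / 2)"
  for S :: "real^'k^'k"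
  by (simp add: mvt_pdf_def Kc_def)

lemma Gamma_pos: "x > 0 \<Longrightarrow> Gamma x > (0::real)"
  by (simp add: Gamma_real_pos_exp)

lemma Kc_pos: "qpos S \<Longrightarrow> \<nu> > 0 \<Longrightarrow> Kc S \<nu> > 0"
  unfolding Kc_def using qpos_det[of S]
  by (intro divide_pos_pos mult_pos_pos Gamma_pos) (auto simp: add_pos_nonneg)

lemma qform_meas2[measurable]: "f \<in> borel_measurable M \<Longrightarrow> (\<lambda>x. f x \<bullet> (A *v f x)) \<in> borel_measurable M"
  for f :: "'a \<Rightarrow> real^'n"
  using measurable_compose[OF _ qform_meas] by blast

lemma mvt_pdf_meas[measurable]: "mvt_pdf \<mu> S \<nu> \<in> borel_measurable borel"
  unfolding mvt_pdf_def by measurable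

lemma open_orth: "open {w::real^'n. \<forall>j::'k::finite. 0 < w $ g j + t $ j}"
proof -
  have eq: "{w::real^'n. \<forall>j::'k. 0 < w $ g j + t $ j} = (\<Inter>j\<in>UNIV. {w. 0 < w $ g j + t $ j})" by auto
  have o: "open {w::real^'n. 0 < w $ g j + t $ j}" for j
    by (intro open_Collect_less continuous_intros)
  show ?thesis unfolding eq by (rule open_INT) (simp_all add: o)
qed

lemma pi1_linear: "linear pi1"
  by (auto intro!: linearI simp: pi1_def vec_eq_iff)
lemma pi1_measurable[measurable]: "pi1 \<in> borel_measurable borel"
  by (intro borel_measurable_continuous_onI linear_continuous_on linear_conv_bounded_linear[THEN iffD1] pi1_linear)

lemma psi_meas_pair: "psi \<in> lborel \<Otimes>\<^sub>M lborel \<rightarrow>\<^sub>M borel"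
  using psi_measurable by (simp add: lborel_prod)

definition Ival :: "real^'m^'m \<Rightarrow> real \<Rightarrow> real \<Rightarrow> ennreal" where
  "Ival G \<nu> p = (\<integral>\<^sup>+v. ennreal ((1 + v \<bullet> (matrix_inv G *v v) / \<nu>) powr (-p)) * indicator posorth v \<partial>lborel)"

lemma core:
  fixes \<Omega> :: "real^'d::finite^'d" and \<Delta>2 :: "real^'m2::finite^'d"
    and \<Gamma>11 :: "real^'m1::finite^'m1" and \<Gamma>22 :: "real^'m2^'m2" and \<nu> :: real
    and B :: "(real^('m2+'d)) set"
  assumes Sq: "qpos (Omega_star \<Omega> (DD \<Delta>2) (GG \<Gamma>11 \<Gamma>22))" and nu: "\<nu> > 0" and B[measurable]: "B \<in> sets borel"
  shows "(\<integral>\<^sup>+u. ennreal (mvt_pdf 0 (Omega_star \<Omega> (DD \<Delta>2) (GG \<Gamma>11 \<Gamma>22)) \<nu> u) * indicator {u. pi1 u \<in> posorth \<and> rho u \<in> B} u \<partial>lborel)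
    = ennreal (Kc (Omega_star \<Omega> (DD \<Delta>2) (GG \<Gamma>11 \<Gamma>22)) \<nu> / Kc (Omega_star \<Omega> \<Delta>2 \<Gamma>22) \<nu>)
        * Ival \<Gamma>11 \<nu> ((\<nu> + real CARD(('m1+'m2)+'d)) / 2)
        * (\<integral>\<^sup>+w. ennreal (mvt_pdf 0 (Omega_star \<Omega> \<Delta>2 \<Gamma>22) \<nu> w) * indicator B w \<partial>lborel)"
proof -
  let ?S = "Omega_star \<Omega> (DD \<Delta>2) (GG \<Gamma>11 \<Gamma>22)" and ?S2 = "Omega_star \<Omega> \<Delta>2 \<Gamma>22"
  define K1 where "K1 = Kc ?S \<nu>"
  define K2 where "K2 = Kc ?S2 \<nu>"
  define p1 where "p1 = (\<nu> + real CARD(('m1+'m2)+'d)) / 2"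
  define I where "I = Ival \<Gamma>11 \<nu> p1"
  define Cst where "Cst = ennreal (K1 / K2) * I"
  have q1: "qpos \<Gamma>11" and q2: "qpos ?S2" using qpos_blocks[OF Sq] by auto
  have K2: "K2 > 0" unfolding K2_def using Kc_pos[OF q2 nu] .
  have K1: "K1 > 0" unfolding K1_def using Kc_pos[OF Sq nu] .
  let ?F = "\<lambda>u. ennreal (mvt_pdf 0 ?S \<nu> u) * indicator {u. pi1 u \<in> posorth \<and> rho u \<in> B} u"
  have Fm[measurable]: "?F \<in> borel_measurable borel" by measurable
  have pt: "(\<integral>\<^sup>+v. ?F (psi (v, w)) \<partial>lborel) = Cst * (ennreal (mvt_pdf 0 ?S2 \<nu> w) * indicator B w)" for w
  proof -
    define s where "s = 1 + w \<bullet> (matrix_inv ?S2 *v w) / \<nu>"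
    have s: "s > 0" unfolding s_def using qform_nonneg[OF qpos_inv[OF q2], of w] nu
      by (simp add: add_pos_nonneg)
    have "(\<integral>\<^sup>+v. ?F (psi (v, w)) \<partial>lborel)
       = (\<integral>\<^sup>+v. (ennreal K1 * indicator B w) * (ennreal ((s + v \<bullet> (matrix_inv \<Gamma>11 *v v) / \<nu>) powr (-p1)) * indicator posorth v) \<partial>lborel)"
    proof (intro nn_integral_cong)
      fix v :: "real^'m1"
      have e1: "1 + psi (v, w) \<bullet> (matrix_inv ?S *v psi (v, w)) / \<nu> = s + v \<bullet> (matrix_inv \<Gamma>11 *v v) / \<nu>"
        unfolding Q_split[OF Sq] s_def by (simp add: add_divide_distrib)
      have e2: "- (\<nu> + real CARD(('m1+'m2)+'d)) / 2 = - p1" by (simp only: p1_def minus_divide_left)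
      have e3: "indicator {u. pi1 u \<in> posorth \<and> rho u \<in> B} (psi (v, w)) = (indicator posorth v * indicator B w :: ennreal)"
        by (simp add: indicator_def)
      show "?F (psi (v, w)) = (ennreal K1 * indicator B w) * (ennreal ((s + v \<bullet> (matrix_inv \<Gamma>11 *v v) / \<nu>) powr (-p1)) * indicator posorth v)"
        unfolding mvt_pdf_eq e1 e2 e3 K1_def[symmetric] using K1
        by (simp add: ennreal_mult mult_ac)
    qed
    also have "\<dots> = (ennreal K1 * indicator B w) * (\<integral>\<^sup>+v. ennreal ((s + v \<bullet> (matrix_inv \<Gamma>11 *v v) / \<nu>) powr (-p1)) * indicator posorth v \<partial>lborel)"
      by (rule nn_integral_cmult) measurable
    also have "\<dots> = (ennreal K1 * indicator B w) * (ennreal (s powr (real CARD('m1) / 2 - p1)) * I)"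
      unfolding scaling[OF s nu] I_def Ival_def ..
    also have "\<dots> = Cst * (ennreal (mvt_pdf 0 ?S2 \<nu> w) * indicator B w)"
    proof -
      have ex: "real CARD('m1) / 2 - p1 = - (\<nu> + real CARD('m2+'d)) / 2"
        by (simp add: p1_def card_sum field_simps)
      have "mvt_pdf 0 ?S2 \<nu> w = K2 * s powr (real CARD('m1) / 2 - p1)"
        unfolding mvt_pdf_eq ex K2_def s_def ..
      moreover have "ennreal K1 = ennreal (K1 / K2) * ennreal K2"
        using K1 K2 by (simp add: ennreal_mult[symmetric])
      ultimately show ?thesis unfolding Cst_def using K2
        by (simp add: ennreal_mult mult_ac)
    qed
    finally show ?thesis .
  qed
  have "(\<integral>\<^sup>+u. ?F u \<partial>lborel) = (\<integral>\<^sup>+u. ?F u \<partial>distr (lborel \<Otimes>\<^sub>M lborel) borel psi)"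
    by (subst (1) lborel_split) (rule refl)
  also have "\<dots> = (\<integral>\<^sup>+z. ?F (psi z) \<partial>(lborel \<Otimes>\<^sub>M lborel))"
    by (rule nn_integral_distr[OF psi_meas_pair]) simp
  also have "\<dots> = (\<integral>\<^sup>+w. (\<integral>\<^sup>+v. ?F (psi (v, w)) \<partial>lborel) \<partial>lborel)"
    by (rule lborel_pair.nn_integral_snd[symmetric]) (rule measurable_compose[OF psi_meas_pair Fm])
  also have "\<dots> = (\<integral>\<^sup>+w. Cst * (ennreal (mvt_pdf 0 ?S2 \<nu> w) * indicator B w) \<partial>lborel)"
    unfolding pt ..
  also have "\<dots> = Cst * (\<integral>\<^sup>+w. ennreal (mvt_pdf 0 ?S2 \<nu> w) * indicator B w \<partial>lborel)"
    by (rule nn_integral_cmult) measurable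
  finally show ?thesis unfolding Cst_def K1_def K2_def I_def p1_def by simp
qed

lemma ennreal_cancel_div:
  fixes C a b :: ennreal assumes "0 < C" "C < top"
  shows "(C * a) / (C * b) = a / b"
proof -
  have inv: "inverse (C * b) = inverse C * inverse b"
    using assms by (intro ennreal_inverse_mult') auto
  have CC: "C * inverse C = 1"
    using ennreal_divide_self[of C] assms by (simp add: divide_ennreal_def)
  have "(C * a) / (C * b) = (C * inverse C) * (a * inverse b)"
    unfolding divide_ennreal_def inv by (simp only: mult_ac)
  then show ?thesis unfolding CC divide_ennreal_def by simp
qed

lemma lin_meas:
  fixes \<xi> c :: "real^'d" and g :: "'d \<Rightarrow> 'n::finite"
  shows "(\<lambda>w::real^'n. \<xi> + (\<chi> k. c $ k * w $ g k)) \<in> borel_measurable borel"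
proof -
  have "linear (\<lambda>w::real^'n. (\<chi> k. c $ k * w $ g k) :: real^'d)"
    by (auto intro!: linearI simp: vec_eq_iff algebra_simps)
  then have "(\<lambda>w::real^'n. (\<chi> k. c $ k * w $ g k) :: real^'d) \<in> borel_measurable borel"
    by (intro borel_measurable_continuous_onI linear_continuous_on linear_conv_bounded_linear[THEN iffD1])
  then show ?thesis by measurable
qed

theorem proposition11:
  fixes \<xi> :: "real^'d" and \<Omega> :: "real^'d^'d"
    and \<Delta>2 :: "real^'m2^'d" and \<tau>2 :: "real^'m2"
    and \<Gamma>11 :: "real^'m1^'m1" and \<Gamma>22 :: "real^'m2^'m2" and \<nu> :: real
  defines "\<Delta> \<equiv> (\<chi> k a. case a of Inl i \<Rightarrow> 0 | Inr j \<Rightarrow> \<Delta>2 $ k $ j) :: real^('m1 + 'm2)^'d"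
    and "\<tau> \<equiv> (\<chi> a. case a of Inl i \<Rightarrow> 0 | Inr j \<Rightarrow> \<tau>2 $ j) :: real^('m1 + 'm2)"
    and "\<Gamma> \<equiv> (\<chi> a b. case a of
              Inl i \<Rightarrow> (case b of Inl j \<Rightarrow> \<Gamma>11 $ i $ j | Inr j \<Rightarrow> 0)
            | Inr i \<Rightarrow> (case b of Inl j \<Rightarrow> 0 | Inr j \<Rightarrow> \<Gamma>22 $ i $ j)) :: real^('m1 + 'm2)^('m1 + 'm2)"
  assumes "SUT_params \<Omega> \<Delta> \<Gamma> \<nu>"
  shows "SUT \<xi> \<Omega> \<Delta> \<tau> \<Gamma> \<nu> = SUT \<xi> \<Omega> \<Delta>2 \<tau>2 \<Gamma>22 \<nu>"
proof -
  have DDe: "\<Delta> = DD \<Delta>2" by (simp add: \<Delta>_def DD_def)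
  have GGe: "\<Gamma> = GG \<Gamma>11 \<Gamma>22" by (simp add: \<Gamma>_def GG_def)
  let ?S = "Omega_star \<Omega> (DD \<Delta>2) (GG \<Gamma>11 \<Gamma>22)" and ?S2 = "Omega_star \<Omega> \<Delta>2 \<Gamma>22"
  have Sq: "qpos ?S" and nu: "\<nu> > 0"
    using assms(4) by (auto simp: SUT_params_def pos_def_qpos DDe GGe)
  have q1: "qpos \<Gamma>11" and q2: "qpos ?S2" using qpos_blocks[OF Sq] by auto
  define h where "h = (\<lambda>u::real^(('m1+'m2)+'d). \<xi> + (\<chi> k. scale_vec \<Omega> $ k * u $ Inr k))"
  define h2 where "h2 = (\<lambda>w::real^('m2+'d). \<xi> + (\<chi> k. scale_vec \<Omega> $ k * w $ Inr k))"
  define A where "A = {u::real^(('m1+'m2)+'d). \<forall>i. u $ Inl i + \<tau> $ i > 0}"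
  define A2 where "A2 = {w::real^('m2+'d). \<forall>i. w $ Inl i + \<tau>2 $ i > 0}"
  have hm[measurable]: "h \<in> borel_measurable borel" unfolding h_def by (rule lin_meas)
  have h2m[measurable]: "h2 \<in> borel_measurable borel" unfolding h2_def by (rule lin_meas)
  have Am[measurable]: "A \<in> sets borel" unfolding A_def using open_orth[of Inl \<tau>] by auto
  have A2m[measurable]: "A2 \<in> sets borel" unfolding A2_def using open_orth[of Inl \<tau>2] by auto
  have hh: "h u = h2 (rho u)" for u by (simp add: h_def h2_def)
  have A_eq: "A = {u. pi1 u \<in> posorth \<and> rho u \<in> A2}"
  proof -
    have "(\<forall>i. 0 < u $ Inl i + \<tau> $ i) \<longleftrightarrow> (\<forall>i. 0 < u $ Inl (Inl i)) \<and> (\<forall>j. 0 < u $ Inl (Inr j) + \<tau>2 $ j)" for u :: "real^(('m1+'m2)+'d)"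
      using all_sum_iff[where P = "\<lambda>i. 0 < u $ Inl i + \<tau> $ i"] by (simp add: \<tau>_def)
    then show ?thesis by (auto simp: A_def A2_def posorth_def)
  qed
  define M where "M = mvt 0 ?S \<nu>"
  define M2 where "M2 = mvt 0 ?S2 \<nu>"
  have sM: "sets M = sets borel" "sets M2 = sets borel" by (simp_all add: M_def M2_def mvt_def)
  have spM: "space M = UNIV" "space M2 = UNIV" by (simp_all add: M_def M2_def mvt_def)
  have emM: "emeasure M X = (\<integral>\<^sup>+u. ennreal (mvt_pdf 0 ?S \<nu> u) * indicator X u \<partial>lborel)" if "X \<in> sets borel" for X
    unfolding M_def mvt_def using that by (subst emeasure_density) auto
  have emM2: "emeasure M2 X = (\<integral>\<^sup>+u. ennreal (mvt_pdf 0 ?S2 \<nu> u) * indicator X u \<partial>lborel)" if "X \<in> sets borel" for X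
    unfolding M2_def mvt_def using that by (subst emeasure_density) auto
  define Cst where "Cst = ennreal (Kc ?S \<nu> / Kc ?S2 \<nu>) * Ival \<Gamma>11 \<nu> ((\<nu> + real CARD(('m1+'m2)+'d)) / 2)"
  have Cpos: "0 < Cst" "Cst < top"
  proof -
    have k: "Kc ?S \<nu> / Kc ?S2 \<nu> > 0" using Kc_pos[OF Sq nu] Kc_pos[OF q2 nu] by simp
    have I1: "Ival \<Gamma>11 \<nu> ((\<nu> + real CARD(('m1+'m2)+'d)) / 2) > 0"
      unfolding Ival_def by (rule I_pos[OF qpos_inv[OF q1] nu])
    have I2: "Ival \<Gamma>11 \<nu> ((\<nu> + real CARD(('m1+'m2)+'d)) / 2) < top"
    proof -
      have pp: "(\<nu> + real CARD(('m1+'m2)+'d)) / 2 > real CARD('m1) / 2" using nu by (simp add: card_sum)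
      show ?thesis using I_fin[OF qpos_inv[OF q1] nu pp] unfolding Ival_def by simp
    qed
    show "0 < Cst" "Cst < top" unfolding Cst_def using k I1 I2
      by (auto simp: ennreal_mult_less_top ennreal_zero_less_mult_iff)
  qed
  have core': "emeasure M {u. pi1 u \<in> posorth \<and> rho u \<in> B} = Cst * emeasure M2 B" if "B \<in> sets borel" for B
  proof -
    have s: "{u. pi1 u \<in> posorth \<and> rho u \<in> B} \<in> sets borel" using that by measurable
    show ?thesis using core[OF Sq nu that] emM[OF s] emM2[OF that] unfolding Cst_def by simp
  qed
  have L: "SUT \<xi> \<Omega> \<Delta> \<tau> \<Gamma> \<nu> = distr (uniform_measure M A) borel h"
    by (simp add: SUT_def M_def h_def A_def DDe GGe)
  have R: "SUT \<xi> \<Omega> \<Delta>2 \<tau>2 \<Gamma>22 \<nu> = distr (uniform_measure M2 A2) borel h2"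
    by (simp add: SUT_def M2_def h2_def A2_def)
  show ?thesis unfolding L R
  proof (rule measure_eqI)
    show "sets (distr (uniform_measure M A) borel h) = sets (distr (uniform_measure M2 A2) borel h2)" by simp
    fix E assume "E \<in> sets (distr (uniform_measure M A) borel h)"
    then have E[measurable]: "E \<in> sets borel" by simp
    have m1: "h \<in> uniform_measure M A \<rightarrow>\<^sub>M borel"
    proof -
      have "h \<in> M \<rightarrow>\<^sub>M borel" using hm unfolding measurable_cong_sets[OF sM(1) refl] .
      then show ?thesis unfolding measurable_cong_sets[OF sets_uniform_measure refl] .
    qed
    have m2: "h2 \<in> uniform_measure M2 A2 \<rightarrow>\<^sub>M borel"
    proof -
      have "h2 \<in> M2 \<rightarrow>\<^sub>M borel" using h2m unfolding measurable_cong_sets[OF sM(2) refl] .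
      then show ?thesis unfolding measurable_cong_sets[OF sets_uniform_measure refl] .
    qed
    have hE: "h -` E \<in> sets borel" "h2 -` E \<in> sets borel"
      using measurable_sets_borel[OF hm E] measurable_sets_borel[OF h2m E] by auto
    have eqs: "A \<inter> h -` E = {u. pi1 u \<in> posorth \<and> rho u \<in> A2 \<inter> h2 -` E}"
      by (auto simp: A_eq hh)
    have "emeasure (distr (uniform_measure M A) borel h) E = emeasure M (A \<inter> h -` E) / emeasure M A"
      using hE by (simp add: emeasure_distr[OF m1 E] spM sM)
    also have "\<dots> = (Cst * emeasure M2 (A2 \<inter> h2 -` E)) / (Cst * emeasure M2 A2)"
    proof -
      have "A2 \<inter> h2 -` E \<in> sets borel" using hE A2m by auto
      then have "emeasure M (A \<inter> h -` E) = Cst * emeasure M2 (A2 \<inter> h2 -` E)"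
        unfolding eqs by (rule core')
      moreover have "emeasure M A = Cst * emeasure M2 A2"
        unfolding A_eq by (rule core'[OF A2m])
      ultimately show ?thesis by (simp only:)
    qed
    also have "\<dots> = emeasure M2 (A2 \<inter> h2 -` E) / emeasure M2 A2"
      by (rule ennreal_cancel_div[OF Cpos])
    also have "\<dots> = emeasure (distr (uniform_measure M2 A2) borel h2) E"
      using hE by (simp add: emeasure_distr[OF m2 E] spM sM)
    finally show "emeasure (distr (uniform_measure M A) borel h) E = emeasure (distr (uniform_measure M2 A2) borel h2) E" .
  qed
qed

end
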